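(* Let $\mathcal{A}=(A_n)_n$ be a van Hove sequence consisting of intervals in $\mathbb{R}$. Let $\varLambda\subseteq\mathbb{R}$ be a uniformly discrete point set whose counting autocorrelation with respect to $\mathcal{A}$ is $\delta_0$ and such that $\lim_{n\to\infty}\mathrm{card}(\varLambda\cap A_n)=\infty$. Then for every nonzero integer $k$, the set $\varLambda\cup(k+\varLambda)$ has, with respect to $\mathcal{A}$, counting autocorrelation and counting diffraction \[\gamma_{\mathrm{count}}=\delta_0+\frac{\delta_k+\delta_{-k}}{2},\qquad \widehat{\gamma_{\mathrm{count}}}=(1+\cos(2\pi kx))\lambda,\] where $\lambda$ is Lebesgue measure.
   Context: For a finite set $F$, $\gamma_F=\frac{1}{\mathrm{card}(F)}\sum_{x,y\in F}\delta_{x-y}$ if $F\ne\emptyset$ and $\gamma_\emptyset=0$. The counting autocorrelation of a locally finite $X\subseteq\mathbb{R}$ with respect to $(A_n)_n$ is the vague limit of $\gamma_{X\cap A_n}$ (convergence on compactly supported continuous functions); its Fourier transform is the counting diffraction. A sequence of intervals $([a_n,b_n])_n$ is van Hove iff $b_n-a_n\to\infty$. Uniformly discrete means there is $r>0$ with $|x-y|\ge r$ for distinct $x,y\in\varLambda$. *)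

theory Defs
  imports "HOL-Analysis.Analysis"
begin

definition Cc_fun :: "(real \<Rightarrow> complex) \<Rightarrow> bool" where
  "Cc_fun f \<longleftrightarrow> continuous_on UNIV f \<and> compact (closure {x. f x \<noteq> 0})"

text \<open>Integral of a test function against
  gamma_F = (1 / card F) * sum over x,y in F of delta_(x-y), and gamma_{} = 0.\<close>
definition gamma_fin_int :: "real set \<Rightarrow> (real \<Rightarrow> complex) \<Rightarrow> complex" where
  "gamma_fin_int F f =
     (if F = {} then 0 else (\<Sum>x\<in>F. \<Sum>y\<in>F. f (x - y)) / of_nat (card F))"

definition counting_autocorrelation ::
  "real set \<Rightarrow> (nat \<Rightarrow> real set) \<Rightarrow> real measure \<Rightarrow> bool" where
  "counting_autocorrelation X A \<gamma> \<longleftrightarrow>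
     (\<forall>f. Cc_fun f \<longrightarrow> complex_integrable \<gamma> f \<and>
        (\<lambda>n. gamma_fin_int (X \<inter> A n) f) \<longlonglongrightarrow> (LINT x|\<gamma>. f x))"

definition weighted_dirac :: "real set \<Rightarrow> (real \<Rightarrow> real) \<Rightarrow> real measure" where
  "weighted_dirac S w = measure_of UNIV (sets borel) (\<lambda>B. \<Sum>x\<in>S \<inter> B. ennreal (w x))"

fun vderiv_iter :: "nat \<Rightarrow> (real \<Rightarrow> complex) \<Rightarrow> real \<Rightarrow> complex" where
  "vderiv_iter 0 \<phi> = \<phi>"
| "vderiv_iter (Suc n) \<phi> = (\<lambda>x. vector_derivative (vderiv_iter n \<phi>) (at x))"

definition schwartz :: "(real \<Rightarrow> complex) \<Rightarrow> bool" where
  "schwartz \<phi> \<longleftrightarrow>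
     (\<forall>n x. (vderiv_iter n \<phi> has_vector_derivative vderiv_iter (Suc n) \<phi> x) (at x)) \<and>
     (\<forall>n m. bounded (range (\<lambda>x. complex_of_real (x ^ m) * vderiv_iter n \<phi> x)))"

definition fourier :: "(real \<Rightarrow> complex) \<Rightarrow> real \<Rightarrow> complex" where
  "fourier \<phi> \<xi> = (LINT x|lborel. \<phi> x * cis (- 2 * pi * x * \<xi>))"

text \<open>\<nu> is the Fourier transform of the measure \<gamma> (in the sense of tempered distributions):
  \<gamma>(\<phi>^) = \<nu>(\<phi>) for every Schwartz function \<phi>.\<close>
definition measure_fourier :: "real measure \<Rightarrow> real measure \<Rightarrow> bool" where
  "measure_fourier \<gamma> \<nu> \<longleftrightarrow>
     (\<forall>\<phi>. schwartz \<phi> \<longrightarrow>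
        complex_integrable \<gamma> (fourier \<phi>) \<and> complex_integrable \<nu> \<phi> \<and>
        (LINT x|\<gamma>. fourier \<phi> x) = (LINT x|\<nu>. \<phi> x))"

definition counting_diffraction ::
  "real set \<Rightarrow> (nat \<Rightarrow> real set) \<Rightarrow> real measure \<Rightarrow> bool" where
  "counting_diffraction X A \<nu> \<longleftrightarrow>
     (\<exists>\<gamma>. counting_autocorrelation X A \<gamma> \<and> measure_fourier \<gamma> \<nu>)"

definition uniformly_discrete :: "real set \<Rightarrow> bool" where
  "uniformly_discrete L \<longleftrightarrow> (\<exists>r>0. \<forall>x\<in>L. \<forall>y\<in>L. x \<noteq> y \<longrightarrow> r \<le> \<bar>x - y\<bar>)"

end

theory Submission
  imports Defs "HOL-Probability.Sinc_Integral"
begin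


lemma weighted_dirac_distr:
  assumes "finite S" "\<And>x. x \<in> S \<Longrightarrow> w x \<ge> 0"
  shows "weighted_dirac S w = distr (density (count_space S) (\<lambda>x. ennreal (w x))) borel (\<lambda>x. x)"
proof -
  let ?M = "distr (density (count_space S) (\<lambda>x. ennreal (w x))) borel (\<lambda>x. x)"
  have "weighted_dirac S w = measure_of UNIV (sets borel) (emeasure ?M)"
    unfolding weighted_dirac_def
  proof (rule measure_of_eq)
    fix B :: "real set" assume "B \<in> sigma_sets UNIV (sets borel)"
    then have B: "B \<in> sets borel" using sets.sigma_sets_eq[of borel] by (metis space_borel)
    have "emeasure ?M B = emeasure (density (count_space S) (\<lambda>x. ennreal (w x))) (B \<inter> S)"
      using B by (simp add: emeasure_distr Int_commute)
    also have "\<dots> = (\<Sum>x\<in>S \<inter> (B \<inter> S). ennreal (w x))"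
      using assms(1) apply (simp add: emeasure_density nn_integral_count_space_finite)
      by (rule sum.cong) auto
    also have "S \<inter> (B \<inter> S) = S \<inter> B" by blast
    finally show "(\<Sum>x\<in>S \<inter> B. ennreal (w x)) = emeasure ?M B" by simp
  qed simp
  also have "\<dots> = ?M"
    using measure_of_of_measure[of ?M] by simp
  finally show ?thesis .
qed

lemma weighted_dirac_integral:
  fixes f :: "real \<Rightarrow> complex"
  assumes "finite S" "\<And>x. x \<in> S \<Longrightarrow> w x \<ge> 0" "f \<in> borel_measurable borel"
  shows "complex_integrable (weighted_dirac S w) f"
    "(LINT x|weighted_dirac S w. f x) = (\<Sum>x\<in>S. of_real (w x) * f x)"
proof -
  have m: "(\<lambda>x. x) \<in> measurable (density (count_space S) (\<lambda>x. ennreal (w x))) borel" by simp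
  have eq: "weighted_dirac S w = distr (density (count_space S) (\<lambda>x. ennreal (w x))) borel (\<lambda>x. x)"
    by (rule weighted_dirac_distr) (use assms in auto)
  show "complex_integrable (weighted_dirac S w) f"
    apply (subst eq)
    apply (subst integrable_distr_eq[OF m assms(3)])
    apply (subst integrable_density)
    using assms by (auto simp: integrable_count_space)
  show "(LINT x|weighted_dirac S w. f x) = (\<Sum>x\<in>S. of_real (w x) * f x)"
    apply (subst eq)
    apply (subst integral_distr[OF m assms(3)])
    apply (subst integral_density)
    using assms by (auto simp: lebesgue_integral_count_space_finite AE_count_space scaleR_conv_of_real intro!: sum.cong)
qed



lemma ud_interval_count:
  fixes W :: "real set"
  assumes r: "r > 0" and ud: "\<forall>x\<in>W. \<forall>y\<in>W. x \<noteq> y \<longrightarrow> r \<le> \<bar>x - y\<bar>" and cd: "c \<le> d"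
  shows "finite (W \<inter> {c..d}) \<and> card (W \<inter> {c..d}) \<le> nat (\<lfloor>(d - c) / r\<rfloor> + 1)"
proof -
  define h where "h y = \<lfloor>(y - c) / r\<rfloor>" for y
  have inj: "inj_on h (W \<inter> {c..d})"
  proof (rule inj_onI)
    fix y1 y2 assume y1: "y1 \<in> W \<inter> {c..d}" and y2: "y2 \<in> W \<inter> {c..d}" and e: "h y1 = h y2"
    show "y1 = y2"
    proof (rule ccontr)
      assume ne: "y1 \<noteq> y2"
      have "\<And>u v. u \<in> W \<Longrightarrow> v \<in> W \<Longrightarrow> u < v \<Longrightarrow> h u < h v"
      proof -
        fix u v assume "u \<in> W" "v \<in> W" "u < v"
        then have "r \<le> v - u" using ud by force
        then have "(v - u) / r \<ge> 1" using r by simp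
        moreover have "(v - c) / r = (u - c) / r + (v - u) / r" by (simp add: diff_divide_distrib)
        ultimately have "(u - c) / r + 1 \<le> (v - c) / r" by linarith
        then have "\<lfloor>(u - c) / r\<rfloor> + 1 \<le> \<lfloor>(v - c) / r\<rfloor>"
          by (metis floor_add_int floor_mono of_int_1)
        then show "h u < h v" unfolding h_def by simp
      qed
      then show False using ne e y1 y2 by (metis IntD1 less_irrefl linorder_neqE_linordered_idom)
    qed
  qed
  have sub: "h ` (W \<inter> {c..d}) \<subseteq> {0..\<lfloor>(d - c) / r\<rfloor>}"
  proof
    fix z assume "z \<in> h ` (W \<inter> {c..d})"
    then obtain y where y: "y \<in> {c..d}" "z = h y" by auto
    have "0 \<le> (y - c) / r" "(y - c) / r \<le> (d - c) / r" using y r by (auto simp: divide_right_mono)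
    then show "z \<in> {0..\<lfloor>(d - c) / r\<rfloor>}" using y unfolding h_def by (auto intro: floor_mono)
  qed
  have fin: "finite (W \<inter> {c..d})"
    using inj sub by (meson finite_atLeastAtMost_int finite_imageD finite_subset)
  have "card (W \<inter> {c..d}) = card (h ` (W \<inter> {c..d}))" using inj by (simp add: card_image)
  also have "\<dots> \<le> card {0..\<lfloor>(d - c) / r\<rfloor>}" using sub by (intro card_mono) auto
  also have "\<dots> = nat (\<lfloor>(d - c) / r\<rfloor> + 1)" by simp
  finally show ?thesis using fin by simp
qed

lemma ud_local_bound:
  fixes W :: "real set"
  assumes "uniformly_discrete W" "R \<ge> 0"
  shows "\<exists>K::nat. \<forall>x. finite (W \<inter> {x - R..x + R}) \<and> card (W \<inter> {x - R..x + R}) \<le> K"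
proof -
  obtain r where r: "r > 0" "\<forall>x\<in>W. \<forall>y\<in>W. x \<noteq> y \<longrightarrow> r \<le> \<bar>x - y\<bar>"
    using assms(1) unfolding uniformly_discrete_def by auto
  show ?thesis
    using ud_interval_count[OF r, of "x - R" "x + R" for x] assms(2)
    by (intro exI[of _ "nat (\<lfloor>(2 * R) / r\<rfloor> + 1)"]) auto
qed

lemma ud_bounded_finite:
  fixes W :: "real set"
  assumes "uniformly_discrete W"
  shows "finite (W \<inter> {c..d})"
proof (cases "c \<le> d")
  case True
  obtain r where r: "r > 0" "\<forall>x\<in>W. \<forall>y\<in>W. x \<noteq> y \<longrightarrow> r \<le> \<bar>x - y\<bar>"
    using assms(1) unfolding uniformly_discrete_def by auto
  show ?thesis using ud_interval_count[OF r True] by simp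
qed simp

lemma ud_shift:
  fixes W :: "real set"
  assumes "uniformly_discrete W"
  shows "uniformly_discrete ((\<lambda>x. t + x) ` W)"
  using assms unfolding uniformly_discrete_def by fastforce

definition TT :: "real set \<Rightarrow> real set \<Rightarrow> (real \<Rightarrow> complex) \<Rightarrow> complex" where
  "TT U V f = (\<Sum>x\<in>U. \<Sum>y\<in>V. f (x - y))"

lemma TT_bound1:
  assumes fin: "finite V" and VW: "V \<subseteq> W"
    and K: "\<forall>x. finite (W \<inter> {x - R..x + R}) \<and> card (W \<inter> {x - R..x + R}) \<le> K"
    and fz: "\<And>z. \<bar>z\<bar> > R \<Longrightarrow> f z = 0" and fB: "\<And>z. norm (f z) \<le> B"
  shows "norm (TT U V f) \<le> real (card U) * (real K * B)"
proof -
  have B0: "B \<ge> 0" using fB[of 0] norm_ge_zero order_trans by blast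
  have inner: "norm (\<Sum>y\<in>V. f (x - y)) \<le> real K * B" for x
  proof -
    have "(\<Sum>y\<in>V. f (x - y)) = (\<Sum>y\<in>V \<inter> {x - R..x + R}. f (x - y))"
      using fin by (intro sum.mono_neutral_right) (auto intro!: fz)
    also have "norm \<dots> \<le> (\<Sum>y\<in>V \<inter> {x - R..x + R}. B)"
      by (rule sum_norm_le) (rule fB)
    also have "\<dots> = real (card (V \<inter> {x - R..x + R})) * B" by simp
    also have "\<dots> \<le> real K * B"
    proof -
      have "card (V \<inter> {x - R..x + R}) \<le> card (W \<inter> {x - R..x + R})"
        using K VW by (intro card_mono) auto
      then have "card (V \<inter> {x - R..x + R}) \<le> K" using K le_trans by blast
      then show ?thesis using B0 by (intro mult_right_mono) auto
    qed
    finally show ?thesis .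
  qed
  have "norm (TT U V f) \<le> (\<Sum>x\<in>U. norm (\<Sum>y\<in>V. f (x - y)))"
    unfolding TT_def by (rule norm_sum)
  also have "\<dots> \<le> (\<Sum>x\<in>U. real K * B)" by (intro sum_mono inner)
  also have "\<dots> = real (card U) * (real K * B)" by simp
  finally show ?thesis .
qed

lemma TT_swap: "TT U V f = TT V U (\<lambda>z. f (- z))"
  unfolding TT_def by (subst sum.swap) simp

lemma TT_bound2:
  assumes fin: "finite U" and UW: "U \<subseteq> W"
    and K: "\<forall>x. finite (W \<inter> {x - R..x + R}) \<and> card (W \<inter> {x - R..x + R}) \<le> K"
    and fz: "\<And>z. \<bar>z\<bar> > R \<Longrightarrow> f z = 0" and fB: "\<And>z. norm (f z) \<le> B"
  shows "norm (TT U V f) \<le> real (card V) * (real K * B)"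
  unfolding TT_swap[of U V f]
  by (rule TT_bound1[OF fin UW K]) (auto intro: fz fB)

lemma TT_union2:
  assumes "finite V1" "finite V2" "V1 \<inter> V2 = {}"
  shows "TT U (V1 \<union> V2) f = TT U V1 f + TT U V2 f"
  unfolding TT_def using assms by (simp add: sum.union_disjoint sum.distrib)

lemma TT_union1:
  assumes "finite U1" "finite U2" "U1 \<inter> U2 = {}"
  shows "TT (U1 \<union> U2) V f = TT U1 V f + TT U2 V f"
  unfolding TT_def using assms by (simp add: sum.union_disjoint)

lemma TT_diff2:
  assumes "finite V" "V' \<subseteq> V"
  shows "TT U (V - V') f = TT U V f - TT U V' f"
  unfolding TT_def using assms by (simp add: sum_diff sum_subtractf finite_subset)

lemma TT_diff1:
  assumes "finite U" "U' \<subseteq> U"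
  shows "TT (U - U') V f = TT U V f - TT U' V f"
  unfolding TT_def using assms by (simp add: sum_diff finite_subset)

lemma TT_shift:
  "TT ((\<lambda>x. t + x) ` U) ((\<lambda>x. t + x) ` V) f = TT U V f"
  unfolding TT_def
  by (simp add: sum.reindex inj_on_def)



lemma final_limit:
  fixes N ci cX :: "nat \<Rightarrow> real" and S0 S1 S2 SX :: "nat \<Rightarrow> complex"
  assumes N: "filterlim N at_top sequentially"
    and l0: "(\<lambda>n. S0 n / of_real (N n)) \<longlonglongrightarrow> \<alpha>0"
    and l1: "(\<lambda>n. S1 n / of_real (N n)) \<longlonglongrightarrow> \<alpha>1"
    and l2: "(\<lambda>n. S2 n / of_real (N n)) \<longlonglongrightarrow> \<alpha>2"
    and li: "(\<lambda>n. ci n / N n) \<longlonglongrightarrow> 0"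
    and eS: "\<And>n. norm (SX n - (2 * S0 n + S1 n + S2 n)) \<le> c * (ci n + D)"
    and eX: "\<And>n. \<bar>cX n - 2 * N n\<bar> \<le> ci n + D"
  shows "(\<lambda>n. SX n / of_real (cX n)) \<longlonglongrightarrow> (2 * \<alpha>0 + \<alpha>1 + \<alpha>2) / 2"
proof -
  have Npos: "eventually (\<lambda>n. N n > 0) sequentially"
    using N by (simp add: filterlim_at_top_dense)
  have invN: "(\<lambda>n. 1 / N n) \<longlonglongrightarrow> 0"
    using tendsto_inverse_0_at_top[OF N] by (simp add: divide_inverse)
  have cd: "(\<lambda>n. (ci n + D) / N n) \<longlonglongrightarrow> 0"
  proof -
    have "(\<lambda>n. ci n / N n + D * (1 / N n)) \<longlonglongrightarrow> 0 + D * 0"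
      by (intro tendsto_intros li invN)
    then show ?thesis by (simp add: add_divide_distrib)
  qed
  define E where "E n = SX n - (2 * S0 n + S1 n + S2 n)" for n
  have E0: "(\<lambda>n. E n / of_real (N n)) \<longlonglongrightarrow> 0"
  proof (rule Lim_null_comparison)
    show "eventually (\<lambda>n. norm (E n / of_real (N n)) \<le> c * ((ci n + D) / N n)) sequentially"
      using Npos
    proof eventually_elim
      case (elim n)
      have "norm (E n / of_real (N n)) = norm (E n) / N n" using elim by (simp add: norm_divide)
      also have "\<dots> \<le> c * (ci n + D) / N n" using eS[of n] elim unfolding E_def
        by (intro divide_right_mono) auto
      finally show ?case by simp
    qed
    show "(\<lambda>n. c * ((ci n + D) / N n)) \<longlonglongrightarrow> 0"
      using tendsto_mult[OF tendsto_const[of c] cd] by simp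
  qed
  have SXN: "(\<lambda>n. SX n / of_real (N n)) \<longlonglongrightarrow> 2 * \<alpha>0 + \<alpha>1 + \<alpha>2"
  proof -
    have "(\<lambda>n. E n / of_real (N n) + 2 * (S0 n / of_real (N n)) + S1 n / of_real (N n) + S2 n / of_real (N n))
          \<longlonglongrightarrow> 0 + 2 * \<alpha>0 + \<alpha>1 + \<alpha>2"
      by (intro tendsto_intros E0 l0 l1 l2)
    moreover have "E n / of_real (N n) + 2 * (S0 n / of_real (N n)) + S1 n / of_real (N n) + S2 n / of_real (N n)
          = SX n / of_real (N n)" for n
      unfolding E_def by (simp add: diff_divide_distrib add_divide_distrib)
    ultimately show ?thesis by simp
  qed
  have cXN: "(\<lambda>n. cX n / N n) \<longlonglongrightarrow> 2"
  proof -
    have e0: "(\<lambda>n. (cX n - 2 * N n) / N n) \<longlonglongrightarrow> 0"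
    proof (rule Lim_null_comparison)
      show "eventually (\<lambda>n. norm ((cX n - 2 * N n) / N n) \<le> (ci n + D) / N n) sequentially"
        using Npos
      proof eventually_elim
        case (elim n)
        then show ?case using eX[of n] by (simp add: abs_divide divide_right_mono)
      qed
      show "(\<lambda>n. (ci n + D) / N n) \<longlonglongrightarrow> 0" by (rule cd)
    qed
    have "(\<lambda>n. (cX n - 2 * N n) / N n + 2) \<longlonglongrightarrow> 0 + 2"
      by (intro tendsto_intros e0)
    moreover have "eventually (\<lambda>n. (cX n - 2 * N n) / N n + 2 = cX n / N n) sequentially"
      using Npos by eventually_elim (simp add: diff_divide_distrib)
    ultimately show ?thesis by (simp add: Lim_transform_eventually)
  qed
  have cXN': "(\<lambda>n. of_real (cX n / N n) :: complex) \<longlonglongrightarrow> 2"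
    using tendsto_of_real[OF cXN, where 'a=complex] by simp
  have "(\<lambda>n. (SX n / of_real (N n)) / of_real (cX n / N n)) \<longlonglongrightarrow> (2 * \<alpha>0 + \<alpha>1 + \<alpha>2) / 2"
    by (rule tendsto_divide[OF SXN cXN']) simp
  moreover have "eventually (\<lambda>n. (SX n / of_real (N n)) / of_real (cX n / N n) = SX n / of_real (cX n)) sequentially"
    using Npos by eventually_elim (case_tac "cX n = 0", simp_all add: of_real_divide)
  ultimately show ?thesis by (rule Lim_transform_eventually)
qed




lemma TT_perturb2:
  assumes fin: "finite V" "finite V'" and UW: "U \<subseteq> W" and fU: "finite U"
    and K: "\<forall>x. finite (W \<inter> {x - R..x + R}) \<and> card (W \<inter> {x - R..x + R}) \<le> K"
    and fz: "\<And>z. \<bar>z\<bar> > R \<Longrightarrow> f z = 0" and fB: "\<And>z. norm (f z) \<le> B"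
  shows "norm (TT U V f - TT U V' f) \<le> (real (card (V - V')) + real (card (V' - V))) * (real K * B)"
proof -
  have "TT U V f = TT U (V \<inter> V') f + TT U (V - V') f"
    using TT_union2[of "V \<inter> V'" "V - V'" U f] fin
    by (metis Int_Diff_Un Int_Diff_disjoint finite_Diff finite_Int)
  moreover have "TT U V' f = TT U (V \<inter> V') f + TT U (V' - V) f"
    using TT_union2[of "V \<inter> V'" "V' - V" U f] fin
    by (metis Int_Diff_Un Int_Diff_disjoint finite_Diff finite_Int Int_commute)
  ultimately have "TT U V f - TT U V' f = TT U (V - V') f - TT U (V' - V) f" by simp
  also have "norm \<dots> \<le> norm (TT U (V - V') f) + norm (TT U (V' - V) f)" by (rule norm_triangle_ineq4)
  also have "\<dots> \<le> real (card (V - V')) * (real K * B) + real (card (V' - V)) * (real K * B)"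
    by (intro add_mono TT_bound2[OF fU UW K fz fB])
  finally show ?thesis by (simp add: algebra_simps)
qed

lemma TT_perturb1:
  assumes fin: "finite U" "finite U'" and VW: "V \<subseteq> W" and fV: "finite V"
    and K: "\<forall>x. finite (W \<inter> {x - R..x + R}) \<and> card (W \<inter> {x - R..x + R}) \<le> K"
    and fz: "\<And>z. \<bar>z\<bar> > R \<Longrightarrow> f z = 0" and fB: "\<And>z. norm (f z) \<le> B"
  shows "norm (TT U V f - TT U' V f) \<le> (real (card (U - U')) + real (card (U' - U))) * (real K * B)"
  unfolding TT_swap[of _ V f]
  by (rule TT_perturb2[OF fin VW fV K]) (auto intro: fz fB)

lemma TT_shift_right:
  "TT U ((\<lambda>x. t + x) ` V) f = TT U V (\<lambda>z. f (z - t))"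
  unfolding TT_def by (simp add: sum.reindex inj_on_def algebra_simps)

lemma TT_shift_left:
  "TT ((\<lambda>x. t + x) ` U) V f = TT U V (\<lambda>z. f (z + t))"
  unfolding TT_def by (simp add: sum.reindex inj_on_def algebra_simps)

lemma gamma_fin_int_TT: "gamma_fin_int F f = TT F F f / of_nat (card F)"
  unfolding gamma_fin_int_def TT_def by simp



lemma Cc_bounds:
  assumes "Cc_fun f"
  shows "\<exists>R B. R \<ge> 0 \<and> (\<forall>z. \<bar>z\<bar> > R \<longrightarrow> f z = 0) \<and> (\<forall>z. norm (f z) \<le> B)"
proof -
  define K where "K = closure {x. f x \<noteq> 0}"
  have cK: "compact K" and cont: "continuous_on UNIV f" using assms unfolding Cc_fun_def K_def by blast+
  have "bounded K" using cK by (rule compact_imp_bounded)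
  then obtain R where R: "\<And>x. x \<in> K \<Longrightarrow> norm x \<le> R" unfolding bounded_iff by blast
  have "continuous_on K f" by (rule continuous_on_subset[OF cont subset_UNIV])
  then have "compact (f ` K)" by (rule compact_continuous_image[OF _ cK])
  then have "bounded (f ` K)" by (rule compact_imp_bounded)
  then obtain B where B: "\<And>y. y \<in> f ` K \<Longrightarrow> norm y \<le> B" unfolding bounded_iff by blast
  have subs: "{x. f x \<noteq> 0} \<subseteq> K" unfolding K_def by (rule closure_subset)
  have sub: "z \<in> K" if "f z \<noteq> 0" for z using subs that by blast
  have 1: "norm (f z) \<le> max B 0" for z
  proof (cases "f z = 0")
    case False
    then have "norm (f z) \<le> B" by (intro B imageI sub)
    then show ?thesis by linarith
  qed simp
  have 2: "f z = 0" if "\<bar>z\<bar> > max R 0" for z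
  proof (rule ccontr)
    assume "f z \<noteq> 0"
    then have "norm z \<le> R" by (intro R sub)
    moreover have "norm z = \<bar>z\<bar>" by simp
    ultimately show False using that by linarith
  qed
  show ?thesis
  proof (intro exI conjI allI impI)
    show "max R 0 \<ge> 0" by simp
    show "f z = 0" if "\<bar>z\<bar> > max R 0" for z using that by (rule 2)
    show "norm (f z) \<le> max B 0" for z by (rule 1)
  qed
qed

lemma Cc_from_bounds:
  assumes "continuous_on UNIV f" "\<And>z. \<bar>z\<bar> > R \<Longrightarrow> f z = 0"
  shows "Cc_fun f"
proof -
  have "{x. f x \<noteq> 0} \<subseteq> cball 0 R"
  proof
    fix x assume "x \<in> {x. f x \<noteq> 0}"
    then have "\<bar>x\<bar> \<le> R" using assms(2) not_less by blast
    then show "x \<in> cball 0 R" by (simp add: mem_cball_0)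
  qed
  then have "closure {x. f x \<noteq> 0} \<subseteq> cball 0 R" by (intro closure_minimal) auto
  then have "bounded (closure {x. f x \<noteq> 0})" using bounded_cball bounded_subset by blast
  then have "compact (closure {x. f x \<noteq> 0})" using compact_eq_bounded_closed closed_closure by blast
  then show ?thesis unfolding Cc_fun_def using assms(1) by blast
qed

lemma Cc_shift:
  assumes "Cc_fun f"
  shows "Cc_fun (\<lambda>z. f (z + t))"
proof -
  obtain R B where RB: "R \<ge> 0" "\<forall>z. \<bar>z\<bar> > R \<longrightarrow> f z = 0" using Cc_bounds[OF assms] by blast
  have c: "continuous_on UNIV f" using assms unfolding Cc_fun_def by blast
  have "continuous_on UNIV (\<lambda>z. f (z + t))"
    by (rule continuous_on_compose2[OF c]) (auto intro!: continuous_intros)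
  moreover have "f (z + t) = 0" if "\<bar>z\<bar> > R + \<bar>t\<bar>" for z
  proof -
    have "\<bar>z + t\<bar> > R" using that by arith
    then show ?thesis using RB(2) by blast
  qed
  ultimately show ?thesis by (rule Cc_from_bounds)
qed




lemma TT_union_overlap:
  assumes fin: "finite P" "finite Q" and W: "P \<subseteq> W" "Q \<subseteq> W"
    and K: "\<forall>x. finite (W \<inter> {x - R..x + R}) \<and> card (W \<inter> {x - R..x + R}) \<le> K"
    and fz: "\<And>z. \<bar>z\<bar> > R \<Longrightarrow> f z = 0" and fB: "\<And>z. norm (f z) \<le> B"
  shows "norm (TT (P \<union> Q) (P \<union> Q) f - (TT P P f + TT P Q f + TT Q P f + TT Q Q f))
           \<le> 4 * real (card (P \<inter> Q)) * (real K * B)"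
proof -
  define I where "I = P \<inter> Q"
  have fI: "finite I" "finite (Q - I)" using fin unfolding I_def by auto
  have IQ: "I \<subseteq> Q" unfolding I_def by blast
  have un: "P \<union> Q = P \<union> (Q - I)" unfolding I_def by blast
  have dj: "P \<inter> (Q - I) = {}" unfolding I_def by blast
  have e1: "TT (P \<union> (Q - I)) (P \<union> (Q - I)) f
      = TT P P f + TT P (Q - I) f + (TT (Q - I) P f + TT (Q - I) (Q - I) f)"
    using TT_union1[OF fin(1) fI(2) dj] TT_union2[OF fin(1) fI(2) dj] by simp
  have e2: "TT P (Q - I) f = TT P Q f - TT P I f" by (rule TT_diff2[OF fin(2) IQ])
  have e3: "TT (Q - I) P f = TT Q P f - TT I P f" by (rule TT_diff1[OF fin(2) IQ])
  have e4: "TT (Q - I) (Q - I) f = TT Q (Q - I) f - TT I (Q - I) f" by (rule TT_diff1[OF fin(2) IQ])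
  have e5: "TT Q (Q - I) f = TT Q Q f - TT Q I f" by (rule TT_diff2[OF fin(2) IQ])
  have "TT (P \<union> Q) (P \<union> Q) f - (TT P P f + TT P Q f + TT Q P f + TT Q Q f)
        = - (TT P I f + TT I P f + TT Q I f + TT I (Q - I) f)"
    unfolding un e1 e2 e3 e4 e5 by (simp add: algebra_simps)
  also have "norm \<dots> \<le> norm (TT P I f) + norm (TT I P f) + norm (TT Q I f) + norm (TT I (Q - I) f)"
    unfolding norm_minus_cancel
    using norm_triangle_ineq[of "TT P I f + TT I P f + TT Q I f" "TT I (Q - I) f"]
      norm_triangle_ineq[of "TT P I f + TT I P f" "TT Q I f"] norm_triangle_ineq[of "TT P I f" "TT I P f"]
    by linarith
  also have "\<dots> \<le> real (card I) * (real K * B) + real (card I) * (real K * B)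
                 + real (card I) * (real K * B) + real (card I) * (real K * B)"
  proof (intro add_mono)
    show "norm (TT P I f) \<le> real (card I) * (real K * B)" by (rule TT_bound2[OF fin(1) W(1) K fz fB])
    show "norm (TT I P f) \<le> real (card I) * (real K * B)" by (rule TT_bound1[OF fin(1) W(1) K fz fB])
    show "norm (TT Q I f) \<le> real (card I) * (real K * B)" by (rule TT_bound2[OF fin(2) W(2) K fz fB])
    show "norm (TT I (Q - I) f) \<le> real (card I) * (real K * B)"
      by (rule TT_bound1[OF fI(2) _ K fz fB]) (use W(2) in blast)
  qed
  also have "\<dots> = 4 * real (card I) * (real K * B)" by simp
  finally show ?thesis unfolding I_def .
qed



lemma Cc_measurable: "Cc_fun h \<Longrightarrow> h \<in> borel_measurable borel"
  unfolding Cc_fun_def by (intro borel_measurable_continuous_onI) blast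

lemma acL_lemma:
  assumes ac: "counting_autocorrelation \<Lambda> A (weighted_dirac {0} (\<lambda>_. 1))" and h: "Cc_fun h"
  shows "(\<lambda>n. TT (\<Lambda> \<inter> A n) (\<Lambda> \<inter> A n) h / of_real (real (card (\<Lambda> \<inter> A n)))) \<longlonglongrightarrow> h 0"
proof -
  have "(\<lambda>n. gamma_fin_int (\<Lambda> \<inter> A n) h) \<longlonglongrightarrow> (LINT x|weighted_dirac {0} (\<lambda>_. 1). h x)"
    using ac h unfolding counting_autocorrelation_def by blast
  moreover have "(LINT x|weighted_dirac {0} (\<lambda>_. 1). h x) = h 0"
    using weighted_dirac_integral(2)[of "{0}" "\<lambda>_. 1" h] Cc_measurable[OF h] by simp
  ultimately show ?thesis unfolding gamma_fin_int_TT by simp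
qed

lemma overlap_small:
  fixes N :: "nat \<Rightarrow> real"
  assumes N: "filterlim N at_top sequentially"
    and ci_le: "\<And>n. ci n \<le> Re (G n) + c"
    and ci0: "\<And>n. 0 \<le> ci n"
    and G: "(\<lambda>n. G n / of_real (N n)) \<longlonglongrightarrow> 0"
  shows "(\<lambda>n. ci n / N n) \<longlonglongrightarrow> 0"
proof -
  have Npos: "eventually (\<lambda>n. N n > 0) sequentially"
    using N by (simp add: filterlim_at_top_dense)
  have invN: "(\<lambda>n. 1 / N n) \<longlonglongrightarrow> 0"
    using tendsto_inverse_0_at_top[OF N] by (simp add: divide_inverse)
  have "(\<lambda>n. Re (G n / of_real (N n)) + c * (1 / N n)) \<longlonglongrightarrow> Re 0 + c * 0"
    by (intro tendsto_intros G invN)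
  then have up: "(\<lambda>n. Re (G n / of_real (N n)) + c * (1 / N n)) \<longlonglongrightarrow> 0" by simp
  show ?thesis
  proof (rule tendsto_sandwich[OF _ _ tendsto_const up])
    show "eventually (\<lambda>n. 0 \<le> ci n / N n) sequentially"
      using Npos by eventually_elim (simp add: ci0)
    show "eventually (\<lambda>n. ci n / N n \<le> Re (G n / of_real (N n)) + c * (1 / N n)) sequentially"
      using Npos
    proof eventually_elim
      case (elim n)
      have "Re (G n / of_real (N n)) = Re (G n) / N n" by (simp add: Re_divide_of_real)
      moreover have "ci n / N n \<le> (Re (G n) + c) / N n" using ci_le[of n] elim by (simp add: divide_right_mono)
      ultimately show ?case by (simp add: add_divide_distrib)
    qed
  qed
qed



lemma autocorr_main:
  fixes a b :: "nat \<Rightarrow> real" and A :: "nat \<Rightarrow> real set" and \<Lambda> :: "real set" and t :: real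
  assumes intervals: "\<And>n. A n = {a n .. b n}"
    and ud: "uniformly_discrete \<Lambda>"
    and ac: "counting_autocorrelation \<Lambda> A (weighted_dirac {0} (\<lambda>_. 1))"
    and card_inf: "filterlim (\<lambda>n. card (\<Lambda> \<inter> A n)) at_top sequentially"
    and t: "t \<noteq> 0"
  shows "counting_autocorrelation (\<Lambda> \<union> (\<lambda>x. t + x) ` \<Lambda>) A
           (weighted_dirac {0, t, - t} (\<lambda>x. if x = 0 then 1 else 1 / 2))"
  unfolding counting_autocorrelation_def
proof (intro allI impI conjI)
  fix f assume f: "Cc_fun f"
  have fm: "f \<in> borel_measurable borel" by (rule Cc_measurable[OF f])
  let ?w = "\<lambda>x::real. if x = 0 then 1 else 1 / 2 :: real"
  show "complex_integrable (weighted_dirac {0, t, - t} ?w) f"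
    by (rule weighted_dirac_integral(1)) (use fm in auto)
  have intval: "(LINT x|weighted_dirac {0, t, - t} ?w. f x) = (2 * f 0 + f (- t) + f t) / 2"
    using weighted_dirac_integral(2)[of "{0, t, - t}" ?w f] fm t by (simp add: field_simps)
  define X where "X = \<Lambda> \<union> (\<lambda>x. t + x) ` \<Lambda>"
  define L where "L n = \<Lambda> \<inter> A n" for n
  define L' where "L' n = \<Lambda> \<inter> {a n - t .. b n - t}" for n
  define Q where "Q n = (\<lambda>x. t + x) ` L' n" for n
  define N where "N n = real (card (L n))" for n
  have N: "filterlim N at_top sequentially"
    unfolding N_def L_def using filterlim_compose[OF filterlim_real_sequentially card_inf] by (simp add: o_def)
  have finL: "finite (L n)" for n unfolding L_def intervals by (rule ud_bounded_finite[OF ud])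
  have finL': "finite (L' n)" for n unfolding L'_def by (rule ud_bounded_finite[OF ud])
  have finQ: "finite (Q n)" for n unfolding Q_def using finL' by blast
  have XA: "X \<inter> A n = L n \<union> Q n" for n
  proof -
    have "(\<lambda>x. t + x) ` \<Lambda> \<inter> {a n..b n} = (\<lambda>x. t + x) ` (\<Lambda> \<inter> {a n - t..b n - t})"
    proof (intro equalityI subsetI)
      fix x assume "x \<in> (\<lambda>x. t + x) ` \<Lambda> \<inter> {a n..b n}"
      then obtain y where "y \<in> \<Lambda>" "x = t + y" "a n \<le> t + y" "t + y \<le> b n" by auto
      then show "x \<in> (\<lambda>x. t + x) ` (\<Lambda> \<inter> {a n - t..b n - t})" by force
    next
      fix x assume "x \<in> (\<lambda>x. t + x) ` (\<Lambda> \<inter> {a n - t..b n - t})"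
      then obtain y where "y \<in> \<Lambda>" "x = t + y" "a n - t \<le> y" "y \<le> b n - t" by auto
      then show "x \<in> (\<lambda>x. t + x) ` \<Lambda> \<inter> {a n..b n}" by force
    qed
    then show ?thesis unfolding X_def L_def Q_def L'_def intervals by blast
  qed
  have LX: "L n \<subseteq> X" "L' n \<subseteq> X" "Q n \<subseteq> X" for n
    unfolding L_def L'_def Q_def X_def by blast+
  obtain R0 B where R0: "R0 \<ge> 0" and fz0: "\<And>z. \<bar>z\<bar> > R0 \<Longrightarrow> f z = 0" and fB: "\<And>z. norm (f z) \<le> B"
    using Cc_bounds[OF f] by blast
  define R where "R = R0 + 2 * \<bar>t\<bar>"
  have R: "R \<ge> 0" unfolding R_def using R0 by simp
  have fz: "f z = 0" if "\<bar>z\<bar> > R" for z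
  proof -
    have "\<bar>z\<bar> > R0" using that unfolding R_def by arith
    then show ?thesis by (rule fz0)
  qed
  define fp where "fp z = f (z + t)" for z
  define fmn where "fmn z = f (z - t)" for z
  have fpz: "fp z = 0" if "\<bar>z\<bar> > R" for z
  proof -
    have "\<bar>z + t\<bar> > R0" using that unfolding R_def by arith
    then show ?thesis unfolding fp_def by (rule fz0)
  qed
  have fmz: "fmn z = 0" if "\<bar>z\<bar> > R" for z
  proof -
    have "\<bar>z - t\<bar> > R0" using that unfolding R_def by arith
    then show ?thesis unfolding fmn_def by (rule fz0)
  qed
  have fpB: "norm (fp z) \<le> B" and fmB: "norm (fmn z) \<le> B" for z unfolding fp_def fmn_def by (rule fB)+
  obtain K1 where K1: "\<forall>x. finite (\<Lambda> \<inter> {x - R..x + R}) \<and> card (\<Lambda> \<inter> {x - R..x + R}) \<le> K1"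
    using ud_local_bound[OF ud R] by blast
  obtain K2 where K2: "\<forall>x. finite ((\<lambda>x. t + x) ` \<Lambda> \<inter> {x - R..x + R}) \<and> card ((\<lambda>x. t + x) ` \<Lambda> \<inter> {x - R..x + R}) \<le> K2"
    using ud_local_bound[OF ud_shift[OF ud] R] by blast
  have K: "\<forall>x. finite (X \<inter> {x - R..x + R}) \<and> card (X \<inter> {x - R..x + R}) \<le> K1 + K2"
  proof
    fix x
    have e: "X \<inter> {x - R..x + R} = (\<Lambda> \<inter> {x - R..x + R}) \<union> ((\<lambda>x. t + x) ` \<Lambda> \<inter> {x - R..x + R})"
      unfolding X_def by blast
    have "card (X \<inter> {x - R..x + R}) \<le> card (\<Lambda> \<inter> {x - R..x + R}) + card ((\<lambda>x. t + x) ` \<Lambda> \<inter> {x - R..x + R})"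
      unfolding e by (rule card_Un_le)
    moreover have "card (\<Lambda> \<inter> {x - R..x + R}) \<le> K1" using K1 by blast
    moreover have "card ((\<lambda>x. t + x) ` \<Lambda> \<inter> {x - R..x + R}) \<le> K2" using K2 by blast
    moreover have "finite (X \<inter> {x - R..x + R})" unfolding e using K1 K2 by blast
    ultimately show "finite (X \<inter> {x - R..x + R}) \<and> card (X \<inter> {x - R..x + R}) \<le> K1 + K2"
      by linarith
  qed
  define KK where "KK = K1 + K2"
  obtain K3 where K3: "\<forall>x. finite (\<Lambda> \<inter> {x - \<bar>t\<bar>..x + \<bar>t\<bar>}) \<and> card (\<Lambda> \<inter> {x - \<bar>t\<bar>..x + \<bar>t\<bar>}) \<le> K3"
    using ud_local_bound[OF ud, of "\<bar>t\<bar>"] by auto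
  define D where "D n = real (card (L n - L' n)) + real (card (L' n - L n))" for n
  have D: "D n \<le> 4 * real K3" for n
  proof -
    define Bd where "Bd = (\<Lambda> \<inter> {a n - \<bar>t\<bar>..a n + \<bar>t\<bar>}) \<union> (\<Lambda> \<inter> {b n - \<bar>t\<bar>..b n + \<bar>t\<bar>})"
    have finBd: "finite Bd" unfolding Bd_def using K3 by blast
    have cBd: "card Bd \<le> 2 * K3"
    proof -
      have "card Bd \<le> card (\<Lambda> \<inter> {a n - \<bar>t\<bar>..a n + \<bar>t\<bar>}) + card (\<Lambda> \<inter> {b n - \<bar>t\<bar>..b n + \<bar>t\<bar>})"
        unfolding Bd_def by (rule card_Un_le)
      also have "\<dots> \<le> K3 + K3" using K3 by (intro add_mono) blast+
      finally show ?thesis by simp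
    qed
    have s1: "L n - L' n \<subseteq> Bd"
    proof
      fix x assume x: "x \<in> L n - L' n"
      then have xl: "x \<in> \<Lambda>" and h: "a n \<le> x" "x \<le> b n" "\<not> (a n - t \<le> x \<and> x \<le> b n - t)"
        unfolding L_def L'_def intervals by auto
      from h have "(a n - \<bar>t\<bar> \<le> x \<and> x \<le> a n + \<bar>t\<bar>) \<or> (b n - \<bar>t\<bar> \<le> x \<and> x \<le> b n + \<bar>t\<bar>)"
        by arith
      then show "x \<in> Bd" unfolding Bd_def using xl by auto
    qed
    have s2: "L' n - L n \<subseteq> Bd"
    proof
      fix x assume x: "x \<in> L' n - L n"
      then have xl: "x \<in> \<Lambda>" and h: "a n - t \<le> x" "x \<le> b n - t" "\<not> (a n \<le> x \<and> x \<le> b n)"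
        unfolding L_def L'_def intervals by auto
      from h have "(a n - \<bar>t\<bar> \<le> x \<and> x \<le> a n + \<bar>t\<bar>) \<or> (b n - \<bar>t\<bar> \<le> x \<and> x \<le> b n + \<bar>t\<bar>)"
        by arith
      then show "x \<in> Bd" unfolding Bd_def using xl by auto
    qed
    have "card (L n - L' n) \<le> 2 * K3" using card_mono[OF finBd s1] cBd by linarith
    moreover have "card (L' n - L n) \<le> 2 * K3" using card_mono[OF finBd s2] cBd by linarith
    ultimately show ?thesis unfolding D_def by linarith
  qed
  have D0: "0 \<le> D n" for n unfolding D_def by simp
  define I where "I n = L n \<inter> Q n" for n
  define ci where "ci n = real (card (I n))" for n
  define \<rho> where "\<rho> = \<bar>t\<bar> / 2"
  have \<rho>: "\<rho> > 0" unfolding \<rho>_def using t by simp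
  define g where "g z = max 0 (1 - \<bar>z - t\<bar> / \<rho>)" for z
  define cg where "cg z = complex_of_real (g z)" for z
  have g0: "g z \<ge> 0" for z unfolding g_def by simp
  have gt: "g t = 1" unfolding g_def by simp
  have g00: "g 0 = 0"
  proof -
    have "\<bar>0 - t\<bar> / \<rho> = 2" unfolding \<rho>_def using t by simp
    then show ?thesis unfolding g_def by simp
  qed
  have gz: "cg z = 0" if "\<bar>z\<bar> > R" for z
  proof -
    have "\<bar>z - t\<bar> \<ge> \<rho>" using that unfolding R_def \<rho>_def using R0 by arith
    then have "\<bar>z - t\<bar> / \<rho> \<ge> 1" using \<rho> by simp
    then show ?thesis unfolding cg_def g_def by simp
  qed
  have gB: "norm (cg z) \<le> 1" for z
  proof -
    have "\<bar>z - t\<bar> / \<rho> \<ge> 0" using \<rho> by simp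
    then show ?thesis unfolding cg_def g_def by simp
  qed
  have cgC: "Cc_fun cg"
  proof (rule Cc_from_bounds)
    show "continuous_on UNIV cg" unfolding cg_def g_def by (intro continuous_intros) (use \<rho> in auto)
    show "\<And>z. R < \<bar>z\<bar> \<Longrightarrow> cg z = 0" by (rule gz)
  qed
  have ci_le: "ci n \<le> Re (TT (L n) (L n) cg) + D n * (real KK * 1)" for n
  proof -
    have "ci n = (\<Sum>x\<in>I n. g (x - (x - t)))" unfolding ci_def using gt by simp
    also have "\<dots> \<le> (\<Sum>x\<in>I n. \<Sum>y\<in>L' n. g (x - y))"
    proof (rule sum_mono)
      fix x assume "x \<in> I n"
      then have "x - t \<in> L' n" unfolding I_def Q_def by auto
      then show "g (x - (x - t)) \<le> (\<Sum>y\<in>L' n. g (x - y))"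
        using member_le_sum[of "x - t" "L' n" "\<lambda>y. g (x - y)"] finL' g0 by blast
    qed
    also have "\<dots> \<le> (\<Sum>x\<in>L n. \<Sum>y\<in>L' n. g (x - y))"
      by (rule sum_mono2[OF finL]) (auto simp: I_def intro!: sum_nonneg g0)
    also have "\<dots> = Re (TT (L n) (L' n) cg)" unfolding TT_def cg_def by simp
    also have "\<dots> \<le> Re (TT (L n) (L n) cg) + norm (TT (L n) (L' n) cg - TT (L n) (L n) cg)"
      using complex_Re_le_cmod[of "TT (L n) (L' n) cg - TT (L n) (L n) cg"] by simp
    also have "norm (TT (L n) (L' n) cg - TT (L n) (L n) cg) \<le> D n * (real KK * 1)"
      using TT_perturb2[OF finL' finL LX(1) finL K gz gB] unfolding D_def KK_def by (simp add: add.commute)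
    finally show ?thesis by simp
  qed
  have ci: "(\<lambda>n. ci n / N n) \<longlonglongrightarrow> 0"
  proof (rule overlap_small[OF N])
    show "ci n \<le> Re (TT (L n) (L n) cg) + 4 * real K3 * real KK" for n
    proof -
      have "D n * (real KK * 1) \<le> 4 * real K3 * real KK"
        using mult_right_mono[OF D[of n], of "real KK"] by simp
      then show ?thesis using ci_le[of n] by linarith
    qed
    show "0 \<le> ci n" for n unfolding ci_def by simp
    show "(\<lambda>n. TT (L n) (L n) cg / of_real (N n)) \<longlonglongrightarrow> 0"
      using acL_lemma[OF ac cgC] g00 unfolding L_def N_def cg_def by simp
  qed
  have l0: "(\<lambda>n. TT (L n) (L n) f / of_real (N n)) \<longlonglongrightarrow> f 0"
    using acL_lemma[OF ac f] unfolding L_def N_def by simp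
  have l1: "(\<lambda>n. TT (L n) (L n) fmn / of_real (N n)) \<longlonglongrightarrow> f (- t)"
    using acL_lemma[OF ac Cc_shift[OF f, of "- t"]] unfolding L_def N_def fmn_def by simp
  have l2: "(\<lambda>n. TT (L n) (L n) fp / of_real (N n)) \<longlonglongrightarrow> f t"
    using acL_lemma[OF ac Cc_shift[OF f, of t]] unfolding L_def N_def fp_def by simp
  have eS: "norm (TT (X \<inter> A n) (X \<inter> A n) f - (2 * TT (L n) (L n) f + TT (L n) (L n) fmn + TT (L n) (L n) fp))
            \<le> (4 * real KK * B) * (ci n + 4 * real K3)" for n
  proof -
    have B0: "B \<ge> 0" using fB[of 0] norm_ge_zero order_trans by blast
    have o: "norm (TT (L n \<union> Q n) (L n \<union> Q n) f - (TT (L n) (L n) f + TT (L n) (Q n) f + TT (Q n) (L n) f + TT (Q n) (Q n) f))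
           \<le> 4 * ci n * (real KK * B)"
      using TT_union_overlap[OF finL finQ LX(1) LX(3) K fz fB] unfolding ci_def I_def KK_def by simp
    have q1: "TT (Q n) (Q n) f = TT (L' n) (L' n) f" unfolding Q_def by (rule TT_shift)
    have q2: "TT (L n) (Q n) f = TT (L n) (L' n) fmn" unfolding Q_def fmn_def by (rule TT_shift_right)
    have q3: "TT (Q n) (L n) f = TT (L' n) (L n) fp" unfolding Q_def fp_def by (rule TT_shift_left)
    have p1: "norm (TT (L' n) (L' n) f - TT (L n) (L n) f) \<le> 2 * D n * (real KK * B)"
    proof -
      have "norm (TT (L' n) (L' n) f - TT (L n) (L' n) f) \<le> D n * (real KK * B)"
        using TT_perturb1[OF finL' finL LX(2) finL' K fz fB] unfolding D_def KK_def by (simp add: add.commute)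
      moreover have "norm (TT (L n) (L' n) f - TT (L n) (L n) f) \<le> D n * (real KK * B)"
        using TT_perturb2[OF finL' finL LX(1) finL K fz fB] unfolding D_def KK_def by (simp add: add.commute)
      ultimately show ?thesis
        using norm_triangle_ineq[of "TT (L' n) (L' n) f - TT (L n) (L' n) f" "TT (L n) (L' n) f - TT (L n) (L n) f"]
        by simp
    qed
    have p2: "norm (TT (L n) (L' n) fmn - TT (L n) (L n) fmn) \<le> D n * (real KK * B)"
      using TT_perturb2[OF finL' finL LX(1) finL K fmz fmB] unfolding D_def KK_def by (simp add: add.commute)
    have p3: "norm (TT (L' n) (L n) fp - TT (L n) (L n) fp) \<le> D n * (real KK * B)"
      using TT_perturb1[OF finL' finL LX(1) finL K fpz fpB] unfolding D_def KK_def by (simp add: add.commute)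
    define e0 where "e0 = TT (L n \<union> Q n) (L n \<union> Q n) f - (TT (L n) (L n) f + TT (L n) (Q n) f + TT (Q n) (L n) f + TT (Q n) (Q n) f)"
    define e1 where "e1 = TT (L' n) (L' n) f - TT (L n) (L n) f"
    define e2 where "e2 = TT (L n) (L' n) fmn - TT (L n) (L n) fmn"
    define e3 where "e3 = TT (L' n) (L n) fp - TT (L n) (L n) fp"
    have "TT (X \<inter> A n) (X \<inter> A n) f - (2 * TT (L n) (L n) f + TT (L n) (L n) fmn + TT (L n) (L n) fp)
          = e0 + e1 + e2 + e3"
      unfolding XA e0_def e1_def e2_def e3_def q1 q2 q3 by (simp add: algebra_simps)
    also have "norm \<dots> \<le> norm e0 + norm e1 + norm e2 + norm e3"
      using norm_triangle_ineq[of "e0 + e1 + e2" e3] norm_triangle_ineq[of "e0 + e1" e2] norm_triangle_ineq[of e0 e1]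
      by linarith
    also have "\<dots> \<le> 4 * ci n * (real KK * B) + 2 * D n * (real KK * B) + D n * (real KK * B) + D n * (real KK * B)"
      using o p1 p2 p3 unfolding e0_def e1_def e2_def e3_def by linarith
    also have "\<dots> = (4 * real KK * B) * (ci n + D n)" by (simp add: algebra_simps)
    also have "\<dots> \<le> (4 * real KK * B) * (ci n + 4 * real K3)"
      using D[of n] B0 by (intro mult_left_mono) auto
    finally show ?thesis .
  qed
  have eX: "\<bar>real (card (X \<inter> A n)) - 2 * N n\<bar> \<le> ci n + 4 * real K3" for n
  proof -
    have c1: "card (L n \<union> Q n) + card (I n) = card (L n) + card (Q n)"
      unfolding I_def using card_Un_Int[OF finL finQ] by simp
    have c2: "card (Q n) = card (L' n)" unfolding Q_def by (simp add: card_image inj_on_def)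
    have c3: "card (L' n) \<le> card (L n) + card (L' n - L n)"
    proof -
      have "L' n \<subseteq> L n \<union> (L' n - L n)" by blast
      then have "card (L' n) \<le> card (L n \<union> (L' n - L n))" using finL finL' by (intro card_mono) auto
      also have "\<dots> \<le> card (L n) + card (L' n - L n)" by (rule card_Un_le)
      finally show ?thesis .
    qed
    have c4: "card (L n) \<le> card (L' n) + card (L n - L' n)"
    proof -
      have "L n \<subseteq> L' n \<union> (L n - L' n)" by blast
      then have "card (L n) \<le> card (L' n \<union> (L n - L' n))" using finL finL' by (intro card_mono) auto
      also have "\<dots> \<le> card (L' n) + card (L n - L' n)" by (rule card_Un_le)
      finally show ?thesis .
    qed
    have r1: "real (card (L n \<union> Q n)) + ci n = N n + real (card (L' n))"
      unfolding ci_def N_def using c1 c2 by (metis of_nat_add)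
    have r3: "real (card (L' n)) \<le> N n + real (card (L' n - L n))"
      unfolding N_def using c3 by (metis of_nat_add of_nat_mono)
    have r4: "N n \<le> real (card (L' n)) + real (card (L n - L' n))"
      unfolding N_def using c4 by (metis of_nat_add of_nat_mono)
    have ci0: "ci n \<ge> 0" unfolding ci_def by simp
    have "\<bar>real (card (X \<inter> A n)) - 2 * N n\<bar> \<le> ci n + D n"
      unfolding XA D_def using r1 r3 r4 ci0 by linarith
    then show ?thesis using D[of n] by linarith
  qed
  have "(\<lambda>n. TT (X \<inter> A n) (X \<inter> A n) f / of_real (real (card (X \<inter> A n)))) \<longlonglongrightarrow> (2 * f 0 + f (- t) + f t) / 2"
    by (rule final_limit[OF N l0 l1 l2 ci eS eX])
  then show "(\<lambda>n. gamma_fin_int ((\<Lambda> \<union> (\<lambda>x. t + x) ` \<Lambda>) \<inter> A n) f) \<longlonglongrightarrow> (LINT x|weighted_dirac {0, t, - t} ?w. f x)"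
    unfolding intval gamma_fin_int_TT X_def by simp
qed



lemma schwartz_cont:
  assumes "schwartz \<phi>"
  shows "continuous_on UNIV \<phi>"
proof -
  have "(\<phi> has_vector_derivative vderiv_iter (Suc 0) \<phi> x) (at x)" for x
    using assms unfolding schwartz_def by (metis vderiv_iter.simps(1))
  then have "isCont \<phi> x" for x by (rule has_vector_derivative_continuous)
  then show ?thesis by (intro continuous_at_imp_continuous_on) blast
qed

lemma schwartz_decay:
  assumes "schwartz \<phi>"
  shows "\<exists>C. \<forall>x. norm (\<phi> x) \<le> C * inverse (1 + x^2)"
proof -
  have b0: "bounded (range (\<lambda>x. complex_of_real (x ^ 0) * vderiv_iter 0 \<phi> x))"
   and b2: "bounded (range (\<lambda>x. complex_of_real (x ^ 2) * vderiv_iter 0 \<phi> x))"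
    using assms unfolding schwartz_def by blast+
  obtain B0 where B0: "\<And>x. norm (\<phi> x) \<le> B0"
    using b0 unfolding bounded_iff by auto
  obtain B2 where B2: "\<And>x. norm (complex_of_real (x ^ 2) * \<phi> x) \<le> B2"
    using b2 unfolding bounded_iff by auto
  have "norm (\<phi> x) \<le> (B0 + B2) * inverse (1 + x^2)" for x
  proof -
    have pos: "1 + x^2 > 0" by (simp add: add_pos_nonneg)
    have "norm (complex_of_real (x ^ 2) * \<phi> x) = x^2 * norm (\<phi> x)" by (simp add: norm_mult norm_power)
    then have "(1 + x^2) * norm (\<phi> x) \<le> B0 + B2" using B0[of x] B2[of x] by (simp add: algebra_simps)
    then show ?thesis using pos by (simp add: field_simps)
  qed
  then show ?thesis by blast
qed

lemma integrable_inv_1sq: "integrable lborel (\<lambda>x::real. inverse (1 + x^2))"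
  using integrable_inverse_1_plus_square by (simp add: set_integrable_def einterval_def)

lemma schwartz_integrable:
  assumes "schwartz \<phi>"
  shows "integrable lborel \<phi>" "\<phi> \<in> borel_measurable borel"
proof -
  show m: "\<phi> \<in> borel_measurable borel" by (rule borel_measurable_continuous_onI[OF schwartz_cont[OF assms]])
  obtain C where C: "\<And>x. norm (\<phi> x) \<le> C * inverse (1 + x^2)" using schwartz_decay[OF assms] by blast
  have i: "integrable lborel (\<lambda>x. C * inverse (1 + x^2))" using integrable_inv_1sq by simp
  have "norm (\<phi> x) \<le> norm (C * inverse (1 + x^2))" for x
    using C[of x] by (metis abs_ge_self order_trans real_norm_def)
  then have ae: "AE x in lborel. norm (\<phi> x) \<le> norm (C * inverse (1 + x^2))" by simp
  have m': "\<phi> \<in> borel_measurable lborel" using m by simp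
  show "integrable lborel \<phi>" by (rule Bochner_Integration.integrable_bound[OF i m' ae])
qed

lemma fourier_measurable:
  assumes "schwartz \<phi>"
  shows "fourier \<phi> \<in> borel_measurable borel"
proof -
  have c: "continuous_on UNIV \<phi>" by (rule schwartz_cont[OF assms])
  have "continuous_on UNIV (\<lambda>p::real\<times>real. \<phi> (snd p) * cis (- 2 * pi * snd p * fst p))"
    by (intro continuous_intros continuous_on_compose2[OF c]) auto
  then have "(\<lambda>p::real\<times>real. \<phi> (snd p) * cis (- 2 * pi * snd p * fst p)) \<in> borel_measurable borel"
    by (rule borel_measurable_continuous_onI)
  then have "(\<lambda>p::real\<times>real. \<phi> (snd p) * cis (- 2 * pi * snd p * fst p)) \<in> borel_measurable (borel \<Otimes>\<^sub>M lborel)"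
    by (subst measurable_cong_sets[of _ "borel \<Otimes>\<^sub>M borel" borel borel]) (auto simp: borel_prod)
  then have "case_prod (\<lambda>\<xi> x. \<phi> x * cis (- 2 * pi * x * \<xi>)) \<in> borel_measurable (borel \<Otimes>\<^sub>M lborel)"
    by (simp add: case_prod_beta)
  then have "(\<lambda>\<xi>. LINT x|lborel. \<phi> x * cis (- 2 * pi * x * \<xi>)) \<in> borel_measurable borel"
    by (rule lborel.borel_measurable_lebesgue_integral)
  then show ?thesis unfolding fourier_def .
qed

lemma cis_cos_sum: "cis (- a) + cis a = complex_of_real (2 * cos a)"
  by (simp add: complex_eq_iff)



lemma integrable_mult_cis:
  assumes int: "complex_integrable lborel \<phi>" and m: "\<phi> \<in> borel_measurable borel"
  shows "complex_integrable lborel (\<lambda>x. \<phi> x * cis (c * x))"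
proof -
  have m': "(\<lambda>x. \<phi> x * cis (c * x)) \<in> borel_measurable lborel"
  proof -
    have "continuous_on UNIV (\<lambda>x::real. cis (c * x))" by (intro continuous_intros)
    then have "(\<lambda>x::real. cis (c * x)) \<in> borel_measurable borel" by (rule borel_measurable_continuous_onI)
    then show ?thesis using m by simp
  qed
  have "AE x in lborel. norm (\<phi> x * cis (c * x)) \<le> norm (\<phi> x)" by (simp add: norm_mult)
  then show ?thesis by (rule Bochner_Integration.integrable_bound[OF int m'])
qed

lemma integrable_mult_cos:
  assumes int: "complex_integrable lborel \<phi>" and m: "\<phi> \<in> borel_measurable borel"
  shows "complex_integrable lborel (\<lambda>x. cos (c * x) *\<^sub>R \<phi> x)"
proof -
  have m': "(\<lambda>x. cos (c * x) *\<^sub>R \<phi> x) \<in> borel_measurable lborel"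
  proof -
    have "continuous_on UNIV (\<lambda>x::real. cos (c * x))" by (intro continuous_intros)
    then have "(\<lambda>x::real. cos (c * x)) \<in> borel_measurable borel" by (rule borel_measurable_continuous_onI)
    then show ?thesis using m by simp
  qed
  have "AE x in lborel. norm (cos (c * x) *\<^sub>R \<phi> x) \<le> norm (\<phi> x)"
    by (intro AE_I2) (simp add: mult_left_le_one_le)
  then show ?thesis by (rule Bochner_Integration.integrable_bound[OF int m'])
qed

lemma diffraction_main:
  fixes t :: real
  assumes t: "t \<noteq> 0"
  shows "measure_fourier (weighted_dirac {0, t, - t} (\<lambda>x. if x = 0 then 1 else 1 / 2))
           (density lborel (\<lambda>x. ennreal (1 + cos (2 * pi * t * x))))"
  unfolding measure_fourier_def
proof (intro allI impI conjI)
  fix \<phi> assume s: "schwartz \<phi>"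
  have m: "\<phi> \<in> borel_measurable borel" by (rule schwartz_integrable(2)[OF s])
  have int: "complex_integrable lborel \<phi>" by (rule schwartz_integrable(1)[OF s])
  have fm: "fourier \<phi> \<in> borel_measurable borel" by (rule fourier_measurable[OF s])
  let ?w = "\<lambda>x::real. if x = 0 then 1 else 1 / 2 :: real"
  define g where "g x = 1 + cos (2 * pi * t * x)" for x
  have g0: "g x \<ge> 0" for x unfolding g_def using cos_ge_minus_one[of "2 * pi * t * x"] by linarith
  have gm: "g \<in> borel_measurable lborel"
  proof -
    have "continuous_on UNIV g" unfolding g_def by (intro continuous_intros)
    then show ?thesis using borel_measurable_continuous_onI by simp
  qed
  have mL: "\<phi> \<in> borel_measurable lborel" using m by simp
  show "complex_integrable (weighted_dirac {0, t, - t} ?w) (fourier \<phi>)"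
    by (rule weighted_dirac_integral(1)) (use fm in auto)
  have ic: "complex_integrable lborel (\<lambda>x. cos ((2 * pi * t) * x) *\<^sub>R \<phi> x)"
    by (rule integrable_mult_cos[OF int m])
  have eqg: "g x *\<^sub>R \<phi> x = \<phi> x + cos ((2 * pi * t) * x) *\<^sub>R \<phi> x" for x
    unfolding g_def by (simp add: scaleR_add_left)
  have intg: "complex_integrable lborel (\<lambda>x. g x *\<^sub>R \<phi> x)"
    unfolding eqg by (intro Bochner_Integration.integrable_add int ic)
  have dens: "(\<lambda>x. ennreal (1 + cos (2 * pi * t * x))) = (\<lambda>x. ennreal (g x))" unfolding g_def ..
  show "complex_integrable (density lborel (\<lambda>x. ennreal (1 + cos (2 * pi * t * x)))) \<phi>"
    unfolding dens by (subst integrable_density[OF mL gm]) (use g0 intg in auto)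
  have lhs: "(LINT x|weighted_dirac {0, t, - t} ?w. fourier \<phi> x)
        = fourier \<phi> 0 + (fourier \<phi> t + fourier \<phi> (- t)) / 2"
    using weighted_dirac_integral(2)[of "{0, t, - t}" ?w "fourier \<phi>"] fm t by (simp add: field_simps)
  have f0: "fourier \<phi> 0 = (LINT x|lborel. \<phi> x)" unfolding fourier_def by simp
  have ft: "fourier \<phi> t + fourier \<phi> (- t) = 2 * (LINT x|lborel. cos ((2 * pi * t) * x) *\<^sub>R \<phi> x)"
  proof -
    have i1: "complex_integrable lborel (\<lambda>x. \<phi> x * cis ((- 2 * pi * t) * x))" by (rule integrable_mult_cis[OF int m])
    have i2: "complex_integrable lborel (\<lambda>x. \<phi> x * cis ((2 * pi * t) * x))" by (rule integrable_mult_cis[OF int m])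
    have "fourier \<phi> t + fourier \<phi> (- t)
        = (LINT x|lborel. \<phi> x * cis ((- 2 * pi * t) * x)) + (LINT x|lborel. \<phi> x * cis ((2 * pi * t) * x))"
      unfolding fourier_def by (simp add: mult_ac)
    also have "\<dots> = (LINT x|lborel. \<phi> x * cis ((- 2 * pi * t) * x) + \<phi> x * cis ((2 * pi * t) * x))"
      by (rule Bochner_Integration.integral_add[OF i1 i2, symmetric])
    also have "\<dots> = (LINT x|lborel. 2 * (cos ((2 * pi * t) * x) *\<^sub>R \<phi> x))"
    proof (rule Bochner_Integration.integral_cong[OF refl])
      fix x
      have "cis ((- 2 * pi * t) * x) + cis ((2 * pi * t) * x) = complex_of_real (2 * cos ((2 * pi * t) * x))"
        using cis_cos_sum[of "(2 * pi * t) * x"] by simp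
      then show "\<phi> x * cis ((- 2 * pi * t) * x) + \<phi> x * cis ((2 * pi * t) * x) = 2 * (cos ((2 * pi * t) * x) *\<^sub>R \<phi> x)"
        by (simp add: distrib_left[symmetric] scaleR_conv_of_real mult_ac)
    qed
    also have "\<dots> = 2 * (LINT x|lborel. cos ((2 * pi * t) * x) *\<^sub>R \<phi> x)"
      by (rule integral_mult_right_zero)
    finally show ?thesis .
  qed
  have rhs: "(LINT x|density lborel (\<lambda>x. ennreal (1 + cos (2 * pi * t * x))). \<phi> x)
        = (LINT x|lborel. \<phi> x) + (LINT x|lborel. cos ((2 * pi * t) * x) *\<^sub>R \<phi> x)"
  proof -
    have "(LINT x|density lborel (\<lambda>x. ennreal (1 + cos (2 * pi * t * x))). \<phi> x) = (LINT x|lborel. g x *\<^sub>R \<phi> x)"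
      unfolding dens by (rule integral_density[OF mL gm]) (use g0 in auto)
    also have "\<dots> = (LINT x|lborel. \<phi> x + cos ((2 * pi * t) * x) *\<^sub>R \<phi> x)" unfolding eqg ..
    also have "\<dots> = (LINT x|lborel. \<phi> x) + (LINT x|lborel. cos ((2 * pi * t) * x) *\<^sub>R \<phi> x)"
      by (rule Bochner_Integration.integral_add[OF int ic])
    finally show ?thesis .
  qed
  show "(LINT x|weighted_dirac {0, t, - t} ?w. fourier \<phi> x)
      = (LINT x|density lborel (\<lambda>x. ennreal (1 + cos (2 * pi * t * x))). \<phi> x)"
    unfolding lhs rhs f0 ft by simp
qed


theorem proposition3p18:
  fixes a b :: "nat \<Rightarrow> real" and A :: "nat \<Rightarrow> real set"
    and \<Lambda> :: "real set" and k :: int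
  assumes intervals: "\<And>n. A n = {a n .. b n}"
    and van_Hove: "filterlim (\<lambda>n. b n - a n) at_top sequentially"
    and ud: "uniformly_discrete \<Lambda>"
    and ac: "counting_autocorrelation \<Lambda> A (weighted_dirac {0} (\<lambda>_. 1))"
    and card_inf: "filterlim (\<lambda>n. card (\<Lambda> \<inter> A n)) at_top sequentially"
    and k: "k \<noteq> 0"
  shows "counting_autocorrelation (\<Lambda> \<union> (\<lambda>x. real_of_int k + x) ` \<Lambda>) A
           (weighted_dirac {0, real_of_int k, - real_of_int k}
              (\<lambda>x. if x = 0 then 1 else 1 / 2))
       \<and> counting_diffraction (\<Lambda> \<union> (\<lambda>x. real_of_int k + x) ` \<Lambda>) A
           (density lborel (\<lambda>x. ennreal (1 + cos (2 * pi * real_of_int k * x))))"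
proof -
  have k0: "real_of_int k \<noteq> 0" using k by simp
  have 1: "counting_autocorrelation (\<Lambda> \<union> (\<lambda>x. real_of_int k + x) ` \<Lambda>) A
           (weighted_dirac {0, real_of_int k, - real_of_int k} (\<lambda>x. if x = 0 then 1 else 1 / 2))"
    by (rule autocorr_main[OF intervals ud ac card_inf k0])
  have 2: "measure_fourier (weighted_dirac {0, real_of_int k, - real_of_int k} (\<lambda>x. if x = 0 then 1 else 1 / 2))
           (density lborel (\<lambda>x. ennreal (1 + cos (2 * pi * real_of_int k * x))))"
    by (rule diffraction_main[OF k0])
  show ?thesis unfolding counting_diffraction_def using 1 2 by blast
qed

end
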